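(* For every $q>0$, every $n\in\mathbb{N}$ and all $k,\ell\in\mathbb{Z}_+^n$, $$\frac{[|k+\ell|]_q!}{[k+\ell]_q!}\ \ge\ \frac{[|k|]_q!}{[k]_q!}\cdot\frac{[|\ell|]_q!}{[\ell]_q!}\cdot q^{\sum_{i<j}k_i\ell_j}.$$
   Context: For $q\in\mathbb{C}\setminus\{0\}$ and $m\in\mathbb{N}$: $[m]_q=1+q+\dots+q^{m-1}$, $[m]_q!=[1]_q[2]_q\cdots[m]_q$, $[0]_q!=1$. For $k=(k_1,\dots,k_n)\in\mathbb{Z}_+^n$: $[k]_q!=[k_1]_q!\cdots[k_n]_q!$ and $|k|=k_1+\dots+k_n$. *)

theory Defs
  imports Complex_Main
begin

definition qint :: "real \<Rightarrow> nat \<Rightarrow> real" where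
  "qint q m = (\<Sum>i<m. q ^ i)"

definition qfact :: "real \<Rightarrow> nat \<Rightarrow> real" where
  "qfact q m = (\<Prod>j\<in>{1..m}. qint q j)"

text \<open>Multi-index q-factorial [k]_q! = [k_1]_q! ... [k_n]_q!,
  for k in Z_+^n represented as a function on indices {0..<n}.\<close>
definition mqfact :: "real \<Rightarrow> nat \<Rightarrow> (nat \<Rightarrow> nat) \<Rightarrow> real" where
  "mqfact q n k = (\<Prod>i<n. qfact q (k i))"

definition mabs :: "nat \<Rightarrow> (nat \<Rightarrow> nat) \<Rightarrow> nat" where
  "mabs n k = (\<Sum>i<n. k i)"

end

theory Submission
  imports Defs
begin

fun G :: "real \<Rightarrow> nat \<Rightarrow> nat \<Rightarrow> real" where
  "G q 0 b = 1"
| "G q (Suc a) 0 = 1"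
| "G q (Suc a) (Suc b) = G q (Suc a) b + q ^ Suc b * G q a (Suc b)"

lemma G_pos: "q > 0 \<Longrightarrow> G q a b > 0"
  by (induction q a b rule: G.induct) (auto intro: add_pos_pos)

lemma G_a0[simp]: "G q a 0 = 1"
  by (cases a) auto

lemma qint_add: "qint q (m + n) = qint q m + q ^ m * qint q n"
  by (induction n) (auto simp: qint_def power_add algebra_simps)

lemma qint_Suc: "qint q (Suc m) = qint q m + q ^ m"
  by (simp add: qint_def)

lemma qfact_Suc: "qfact q (Suc m) = qfact q m * qint q (Suc m)"
proof -
  have "{1..Suc m} = insert (Suc m) {1..m}" by auto
  then show ?thesis by (simp add: qfact_def mult.commute)
qed

lemma qfact_0[simp]: "qfact q 0 = 1" by (simp add: qfact_def)

lemma qint_pos: "q > 0 \<Longrightarrow> m > 0 \<Longrightarrow> qint q m > 0"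
  unfolding qint_def by (rule sum_pos) auto

lemma qfact_pos: "q > 0 \<Longrightarrow> qfact q m > 0"
  by (induction m) (auto simp: qfact_Suc qint_pos)

lemma G_fact: "G q a b * qfact q a * qfact q b = qfact q (a + b)"
proof (induction q a b rule: G.induct)
  case (1 q b) then show ?case by simp
next
  case (2 q a) then show ?case by simp
next
  case (3 q a b)
  have e: "qint q (Suc (Suc (a + b))) = qint q (Suc b) + q ^ Suc b * qint q (Suc a)"
    using qint_add[of q "Suc b" "Suc a"] by (simp add: add.commute)
  have "G q (Suc a) (Suc b) * qfact q (Suc a) * qfact q (Suc b)
      = (G q (Suc a) b * qfact q (Suc a) * qfact q b) * qint q (Suc b)
        + q ^ Suc b * (G q a (Suc b) * qfact q a * qfact q (Suc b)) * qint q (Suc a)"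
    by (simp add: qfact_Suc[of q a] qfact_Suc[of q b] algebra_simps)
  also have "\<dots> = qfact q (Suc (a + b)) * qint q (Suc (Suc (a+b)))"
    using 3 by (simp add: e algebra_simps)
  also have "\<dots> = qfact q (Suc a + Suc b)" by (simp add: qfact_Suc)
  finally show ?case .
qed

lemma G_mono_b: "q > 0 \<Longrightarrow> G q a b \<le> G q a (b + e)"
proof (induction e)
  case (Suc e)
  have "G q a (b+e) \<le> G q a (Suc (b+e))"
  proof (cases a)
    case (Suc a') then show ?thesis using G_pos[of q a' "Suc (b+e)"] Suc.prems by simp
  qed simp
  then show ?case using Suc by simp
qed simp

lemma G_step_a: "q > 0 \<Longrightarrow> q ^ d * G q x d \<le> G q (Suc x) d"
proof (cases d)
  case (Suc d') assume "q > 0"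
  then show ?thesis using Suc G_pos[of q "Suc x" d'] by simp
qed simp

lemma G_mono_a: "q > 0 \<Longrightarrow> q ^ (a * d) * G q c d \<le> G q (a + c) d"
proof (induction a)
  case (Suc a)
  have "q ^ (Suc a * d) * G q c d = q ^ d * (q ^ (a * d) * G q c d)"
    by (simp add: power_add)
  also have "\<dots> \<le> q ^ d * G q (a + c) d" using Suc by (simp add: mult_left_mono)
  also have "\<dots> \<le> G q (Suc a + c) d" using G_step_a[OF Suc.prems] by simp
  finally show ?case .
qed simp

lemma G_ineq:
  assumes q: "q > 0"
  shows "G q a b * G q c d * q ^ (a * d) \<le> G q (a + c) (b + d)"
proof (induction "a + b" arbitrary: a b rule: less_induct)
  case less
  show ?case
  proof (cases a)
    case 0
    then show ?thesis using G_mono_b[OF q, of c d b] by (simp add: add.commute)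
  next
    case (Suc a')
    show ?thesis
    proof (cases b)
      case 0
      then show ?thesis using G_mono_a[OF q, of a d c] by (simp add: mult.commute)
    next
      case (Suc b')
      have IH1: "G q (Suc a') b' * G q c d * q ^ (Suc a' * d) \<le> G q (Suc a' + c) (b' + d)"
        using less[of "Suc a'" b'] \<open>a = Suc a'\<close> Suc by simp
      have IH2: "G q a' (Suc b') * G q c d * q ^ (a' * d) \<le> G q (a' + c) (Suc b' + d)"
        using less[of a' "Suc b'"] \<open>a = Suc a'\<close> Suc by simp
      have "G q (Suc a') (Suc b') * G q c d * q ^ (Suc a' * d)
          = G q (Suc a') b' * G q c d * q ^ (Suc a' * d)
            + q ^ Suc (b' + d) * (G q a' (Suc b') * G q c d * q ^ (a' * d))"
        by (simp add: algebra_simps power_add)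
      also have "\<dots> \<le> G q (Suc a' + c) (b' + d) + q ^ Suc (b' + d) * G q (a' + c) (Suc b' + d)"
        using IH1 IH2 q by (intro add_mono mult_left_mono) auto
      also have "\<dots> = G q (Suc a' + c) (Suc b' + d)" by simp
      finally show ?thesis using \<open>a = Suc a'\<close> Suc by simp
    qed
  qed
qed

lemma mqfact_pos: "q > 0 \<Longrightarrow> mqfact q n k > 0"
  by (simp add: mqfact_def qfact_pos prod_pos)

lemma M_Suc:
  assumes "q > 0"
  shows "qfact q (mabs (Suc n) k) / mqfact q (Suc n) k
       = qfact q (mabs n k) / mqfact q n k * G q (mabs n k) (k n)"
proof -
  have "qfact q (mabs (Suc n) k) = G q (mabs n k) (k n) * qfact q (mabs n k) * qfact q (k n)"
    using G_fact[of q "mabs n k" "k n"] by (simp add: mabs_def)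
  moreover have "mqfact q (Suc n) k = mqfact q n k * qfact q (k n)"
    by (simp add: mqfact_def)
  ultimately show ?thesis using qfact_pos[OF assms, of "k n"] mqfact_pos[OF assms, of n k]
    by (simp add: field_simps)
qed

lemma E_Suc:
  "(\<Sum>i<Suc n. \<Sum>j<Suc n. if i < j then k i * l j else 0)
   = (\<Sum>i<n. \<Sum>j<n. if i < j then k i * l j else 0) + mabs n k * l n"
  by (simp add: mabs_def sum.distrib sum_distrib_right)

theorem lemma3p7:
  fixes q :: real and n :: nat and k l :: "nat \<Rightarrow> nat"
  assumes "q > 0"
  shows "qfact q (mabs n (\<lambda>i. k i + l i)) / mqfact q n (\<lambda>i. k i + l i)
     \<ge> (qfact q (mabs n k) / mqfact q n k) * (qfact q (mabs n l) / mqfact q n l)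
        * q ^ (\<Sum>i<n. \<Sum>j<n. if i < j then k i * l j else 0)"
proof (induction n)
  case 0 then show ?case by (simp add: mabs_def mqfact_def)
next
  case (Suc n)
  let ?E = "\<Sum>i<n. \<Sum>j<n. if i < j then k i * l j else 0"
  define Mk where "Mk = qfact q (mabs n k) / mqfact q n k"
  define Ml where "Ml = qfact q (mabs n l) / mqfact q n l"
  define Mkl where "Mkl = qfact q (mabs n (\<lambda>i. k i + l i)) / mqfact q n (\<lambda>i. k i + l i)"
  have habs: "mabs n (\<lambda>i. k i + l i) = mabs n k + mabs n l"
    by (simp add: mabs_def sum.distrib)
  have pk: "Mk \<ge> 0" "Ml \<ge> 0" "Mkl \<ge> 0" unfolding Mk_def Ml_def Mkl_def
    using qfact_pos mqfact_pos assms by (auto intro: divide_nonneg_pos less_imp_le)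
  have g: "G q (mabs n k) (k n) * G q (mabs n l) (l n) * q ^ (mabs n k * l n)
      \<le> G q (mabs n k + mabs n l) (k n + l n)"
    by (rule G_ineq[OF assms])
  have "Mk * G q (mabs n k) (k n) * (Ml * G q (mabs n l) (l n)) * q ^ (?E + mabs n k * l n)
      = (Mk * Ml * q ^ ?E) * (G q (mabs n k) (k n) * G q (mabs n l) (l n) * q ^ (mabs n k * l n))"
    by (simp add: power_add algebra_simps)
  also have "\<dots> \<le> Mkl * G q (mabs n k + mabs n l) (k n + l n)"
    using Suc[folded Mk_def Ml_def Mkl_def] g pk assms G_pos[OF assms]
    by (intro mult_mono) (auto intro: mult_nonneg_nonneg less_imp_le)
  finally show ?case
    unfolding M_Suc[OF assms] E_Suc Mk_def[symmetric] Ml_def[symmetric] Mkl_def[symmetric]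
    using habs by simp
qed

end
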